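(* Let $\mathcal W$ be a set of treatments, $(Y_t(w))_{w\in\mathcal W}$ i.i.d. over $t$, $W_t$ drawn with conditional law $P_{t-1}$ given $H^{t-1}=\{(Y_s,W_s):s<t\}$ that is a known function of $H^{t-1}$ (and does not depend on current or future potential outcomes), $Y_t=Y_t(W_t)$, $m(w)=\mathbb E[Y_t(w)]$; assume $\mathrm{Var}(Y_t(w))$ bounded above and away from zero and $\mathbb E|Y_t(w)|^{2+\delta}$ bounded, uniformly in $w$. Let $\psi$ be a linear functional continuous on each $L_2(P_{t-1})$ with Riesz representers $\gamma_t$ ($\mathbb E_{t-1}[\gamma_t f]=\psi(f)$ for $f\in L_2(P_{t-1})$) satisfying $\mathbb E_{t-1}[\gamma_t^2]>b>0$. Suppose that for some $\delta>0$, $\alpha\in[0,\delta/(2+\delta))$ and constants $C,C'>0$, $$\frac{\mathbb E_{t-1}[|\gamma_t|^{2+\delta}]}{\mathbb E_{t-1}[\gamma_t^2]^{2+\delta}}\le C\quad\text{and}\quad\mathbb E_{t-1}[\gamma_t^2]\le C't^\alpha\quad\text{for all }t.$$ For each horizon $T$ let $\lambda_t$, $t=1,\dots,T$, be $H^{t-1}$-measurable allocation rates with $\lambda_t<1$ for $t<T$, $\lambda_T=1$, and for some $C''>0$ $$\frac1{1+T-t}\le\lambda_t\le C''\frac{\mathbb E_{t-1}[\gamma_t^2]^{-1}}{t^{-\alpha}+T^{1-\alpha}-t^{1-\alpha}}.$$ Define $h_t\ge0$ by the recursion $h_t^2\,\mathbb E_{t-1}[\gamma_t^2]=\big(1-\sum_{s=1}^{t-1}h_s^2\,\mathbb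 E_{s-1}[\gamma_s^2]\big)\lambda_t$. Then, as $T\to\infty$: (A1) $\big(\sum_{t=1}^T h_t\big)^2/\mathbb E\big[\sum_{t=1}^T h_t^2\gamma_t^2\big]\to\infty$ in probability; (A2) for some $p>1$, $\sum_{t=1}^T h_t^2\mathbb E_{t-1}[\gamma_t^2]/\mathbb E\big[\sum_{t=1}^T h_t^2\gamma_t^2\big]\to1$ in $L_p$; (A3) $\sum_{t=1}^T h_t^{2+\delta}\mathbb E_{t-1}[|\gamma_t|^{2+\delta}]/\mathbb E\big[\sum_{t=1}^T h_t^2\gamma_t^2\big]^{1+\delta/2}\to0$ in probability.
   Context: $\mathbb E_{t-1}$ is conditional expectation given $H^{t-1}$; $\gamma_t$ inside expectations means $\gamma_t(W_t)$, with $\gamma_t=\gamma(\cdot;H^{t-1})$. $L_2(P_{t-1})$ is the space of functions $f$ with $\mathbb E_{t-1}[f(W_t)^2]<\infty$; continuity of $\psi$ means $|\psi(f)|\le c_{t-1}(\mathbb E_{t-1}[f(W_t)^2])^{1/2}$ for some $c_{t-1}$. *)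

theory Defs
  imports "HOL-Probability.Probability"
begin

definition hist :: "'a measure \<Rightarrow> 'w measure \<Rightarrow> (nat \<Rightarrow> 'w \<Rightarrow> 'a \<Rightarrow> real)
    \<Rightarrow> (nat \<Rightarrow> 'a \<Rightarrow> 'w) \<Rightarrow> nat \<Rightarrow> 'a measure" where
  "hist M Wsp Y W t = sigma (space M)
     {(\<lambda>\<omega>. (Y s (W s \<omega>) \<omega>, W s \<omega>)) -` A \<inter> space M | s A.
        s \<in> {1..t} \<and> A \<in> sets (borel \<Otimes>\<^sub>M Wsp)}"

definition hist_fut :: "'a measure \<Rightarrow> 'w measure \<Rightarrow> (nat \<Rightarrow> 'w \<Rightarrow> 'a \<Rightarrow> real)
    \<Rightarrow> (nat \<Rightarrow> 'a \<Rightarrow> 'w) \<Rightarrow> nat \<Rightarrow> 'a measure" where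
  "hist_fut M Wsp Y W t = sigma (space M)
     (sets (hist M Wsp Y W (t - 1)) \<union>
      {Y s w -` B \<inter> space M | s w B. t \<le> s \<and> w \<in> space Wsp \<and> B \<in> sets borel})"

definition L2k :: "'w measure \<Rightarrow> ('w \<Rightarrow> real) set" where
  "L2k P = {f. f \<in> borel_measurable P \<and> integrable P (\<lambda>w. (f w)\<^sup>2)}"

definition conv_prob_infty :: "'a measure \<Rightarrow> (nat \<Rightarrow> 'a \<Rightarrow> real) \<Rightarrow> bool" where
  "conv_prob_infty M X \<longleftrightarrow> (\<forall>T. X T \<in> borel_measurable M) \<and>
     (\<forall>K::real. (\<lambda>T. measure M {\<omega>\<in>space M. X T \<omega> \<le> K}) \<longlonglongrightarrow> 0)"

definition conv_prob :: "'a measure \<Rightarrow> (nat \<Rightarrow> 'a \<Rightarrow> real) \<Rightarrow> real \<Rightarrow> bool" where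
  "conv_prob M X c \<longleftrightarrow> (\<forall>T. X T \<in> borel_measurable M) \<and>
     (\<forall>\<epsilon>>0. (\<lambda>T. measure M {\<omega>\<in>space M. \<bar>X T \<omega> - c\<bar> > \<epsilon>}) \<longlonglongrightarrow> 0)"

definition conv_Lp :: "'a measure \<Rightarrow> real \<Rightarrow> (nat \<Rightarrow> 'a \<Rightarrow> real) \<Rightarrow> real \<Rightarrow> bool" where
  "conv_Lp M p X c \<longleftrightarrow> (\<forall>T. X T \<in> borel_measurable M) \<and>
     ((\<lambda>T. \<integral>\<^sup>+\<omega>. ennreal (\<bar>X T \<omega> - c\<bar> powr p) \<partial>M) \<longlonglongrightarrow> 0)"

end

theory Submission
  imports Defs
begin

lemma conc_ineq:
  fixes t T \<alpha> :: real
  assumes "0 < t" "t \<le> T" "0 \<le> \<alpha>" "\<alpha> < 1"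
  shows "(1 - \<alpha>) * T powr (- \<alpha>) * (T - t) \<le> T powr (1 - \<alpha>) - t powr (1 - \<alpha>)"
proof -
  have T0: "T > 0" using assms by linarith
  have y: "t powr (1-\<alpha>) * T powr \<alpha> \<le> (1-\<alpha>)*t + \<alpha>*T"
    using Youngs_inequality_0[of "1-\<alpha>" \<alpha> t T] assms T0 by simp
  have "t powr (1-\<alpha>) = (t powr (1-\<alpha>) * T powr \<alpha>) * T powr (-\<alpha>)"
    using T0 by (simp add: powr_minus field_simps)
  also have "\<dots> \<le> ((1-\<alpha>)*t + \<alpha>*T) * T powr (-\<alpha>)"
    using y by (intro mult_right_mono) auto
  finally have a: "t powr (1-\<alpha>) \<le> ((1-\<alpha>)*t + \<alpha>*T) * T powr (-\<alpha>)" .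
  have b: "T powr (1-\<alpha>) = T * T powr (-\<alpha>)"
    using T0 by (simp add: powr_diff powr_minus field_simps)
  show ?thesis using a b by (simp add: algebra_simps)
qed

lemma key_det:
  fixes lam v q :: "nat \<Rightarrow> real" and T :: nat and \<alpha> C'' :: real
  assumes T1: "T \<ge> 1" and a0: "0 \<le> \<alpha>" and a1: "\<alpha> < 1" and C: "C'' > 0"
    and vpos: "\<forall>t\<in>{1..T}. v t > 0"
    and lt1: "\<forall>t\<in>{1..<T}. lam t < 1" and last: "lam T = 1"
    and bnd: "\<forall>t\<in>{1..T}. 1 / (1 + real T - real t) \<le> lam t \<and>
                  lam t \<le> C'' * inverse (v t) / (real t powr (- \<alpha>) + real T powr (1 - \<alpha>) - real t powr (1 - \<alpha>))"
    and rec: "\<forall>t\<in>{1..T}. q t = (1 - (\<Sum>s\<in>{1..<t}. q s)) * lam t"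
  shows "(\<Sum>t=1..T. q t) = 1 \<and> (\<forall>t\<in>{1..T}. 0 \<le> q t \<and> q t * v t \<le> C'' / (1 - \<alpha>) * real T powr (\<alpha> - 1))"
proof -
  have R: "0 \<le> 1 - (\<Sum>s\<in>{1..t}. q s) \<and> 1 - (\<Sum>s\<in>{1..t}. q s) \<le> (real T - real t) / real T"
    if "t \<le> T" for t
    using that
  proof (induction t)
    case 0
    then show ?case using T1 by simp
  next
    case (Suc t)
    let ?R = "1 - (\<Sum>s\<in>{1..t}. q s)"
    have IH: "0 \<le> ?R" "?R \<le> (real T - real t) / real T" using Suc by auto
    have st: "Suc t \<in> {1..T}" using Suc by auto
    have q: "q (Suc t) = ?R * lam (Suc t)"
      using rec st by (simp add: atLeastLessThanSuc_atLeastAtMost)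
    have sum: "(\<Sum>s\<in>{1..Suc t}. q s) = (\<Sum>s\<in>{1..t}. q s) + q (Suc t)"
      by simp
    have new: "1 - (\<Sum>s\<in>{1..Suc t}. q s) = ?R * (1 - lam (Suc t))"
      using sum q by (simp add: algebra_simps)
    have l1: "lam (Suc t) \<le> 1"
    proof (cases "Suc t = T")
      case True then show ?thesis using last by simp
    next
      case False
      then have "Suc t \<in> {1..<T}" using Suc.prems by auto
      then show ?thesis using lt1 by (meson less_imp_le)
    qed
    have l2: "1 / (real T - real t) \<le> lam (Suc t)"
    proof -
      have "1 / (1 + real T - real (Suc t)) \<le> lam (Suc t)" using bnd st by blast
      moreover have "1 + real T - real (Suc t) = real T - real t" by simp
      ultimately show ?thesis by simp
    qed
    have Tt: "real T - real t \<ge> 1" using Suc.prems by linarith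
    have "1 - lam (Suc t) \<le> 1 - 1 / (real T - real t)" using l2 by simp
    also have "\<dots> = (real T - real (Suc t)) / (real T - real t)" using Tt by (simp add: field_simps)
    finally have l3: "1 - lam (Suc t) \<le> (real T - real (Suc t)) / (real T - real t)" .
    have "?R * (1 - lam (Suc t)) \<le> (real T - real t) / real T * ((real T - real (Suc t)) / (real T - real t))"
      using IH l1 l3 by (intro mult_mono) auto
    also have "\<dots> = (real T - real (Suc t)) / real T" using Tt by (simp add: field_simps)
    finally show ?case using new IH l1 by simp
  qed
  have S1: "(\<Sum>t=1..T. q t) = 1" using R[of T] by simp
  have main: "0 \<le> q t \<and> q t * v t \<le> C'' / (1 - \<alpha>) * real T powr (\<alpha> - 1)" if t: "t \<in> {1..T}" for t
  proof -
    obtain k where k: "t = Suc k" using t by (cases t) auto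
    let ?R = "1 - (\<Sum>s\<in>{1..<t}. q s)"
    have Req: "?R = 1 - (\<Sum>s\<in>{1..k}. q s)" using k by (simp add: atLeastLessThanSuc_atLeastAtMost)
    have Rb: "0 \<le> ?R" "?R \<le> (real T - real t + 1) / real T"
      using R[of k] t k Req by auto
    have vt: "v t > 0" using vpos t by auto
    have tpos: "real t > 0" "real t \<le> real T" using t by auto
    define D where "D = real t powr (- \<alpha>) + real T powr (1 - \<alpha>) - real t powr (1 - \<alpha>)"
    have c: "(1 - \<alpha>) * real T powr (- \<alpha>) * (real T - real t) \<le> real T powr (1 - \<alpha>) - real t powr (1 - \<alpha>)"
      using conc_ineq[of "real t" "real T" \<alpha>] tpos a0 a1 by simp
    have tT: "real T powr (- \<alpha>) \<le> real t powr (- \<alpha>)"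
      using tpos a0 by (simp add: powr_mono2')
    define X where "X = real T powr (- \<alpha>)"
    have Tpos: "X > 0" using tpos unfolding X_def by simp
    have tT': "X \<le> real t powr (- \<alpha>)" unfolding X_def by (rule tT)
    have c': "(1 - \<alpha>) * X * (real T - real t) \<le> real T powr (1 - \<alpha>) - real t powr (1 - \<alpha>)"
      using c unfolding X_def .
    have aX: "0 \<le> \<alpha> * X" using a0 Tpos by simp
    have e1: "(1 - \<alpha>) * X * (real T - real t + 1) = (1 - \<alpha>) * X * (real T - real t) + X - \<alpha> * X"
      by (simp add: algebra_simps)
    have Dlow: "(1 - \<alpha>) * X * (real T - real t + 1) \<le> D"
      unfolding D_def using e1 c' tT' aX by linarith
    have pos1: "(1 - \<alpha>) * X * (real T - real t + 1) > 0"
      using a1 Tpos tpos by (intro mult_pos_pos) auto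
    have Dpos: "D > 0" using Dlow pos1 by linarith
    have lb: "1 / (1 + real T - real t) \<le> lam t" and ub: "lam t \<le> C'' * inverse (v t) / D"
      using bnd t unfolding D_def by blast+
    have "0 \<le> 1 / (1 + real T - real t)" using tpos by simp
    then have lam0: "lam t \<ge> 0" using lb by linarith
    have ee: "C'' * inverse (v t) / D * v t = C'' / D" using vt by (simp add: field_simps)
    have "lam t * v t \<le> C'' * inverse (v t) / D * v t" using ub vt by (intro mult_right_mono) auto
    also have "\<dots> = C'' / D" by (rule ee)
    finally have lamv: "lam t * v t \<le> C'' / D" .
    have q: "q t = ?R * lam t" using rec t by simp
    have q0: "0 \<le> q t" using q Rb lam0 by simp
    have "q t * v t = ?R * (lam t * v t)" using q by simp
    also have "\<dots> \<le> (real T - real t + 1) / real T * (C'' / D)"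
      using Rb lamv lam0 vt by (intro mult_mono) auto
    also have "\<dots> \<le> (real T - real t + 1) / real T * (C'' / ((1 - \<alpha>) * X * (real T - real t + 1)))"
    proof (rule mult_left_mono)
      show "C'' / D \<le> C'' / ((1 - \<alpha>) * X * (real T - real t + 1))"
        using Dlow pos1 C by (intro divide_left_mono) auto
      show "0 \<le> (real T - real t + 1) / real T" using tpos by simp
    qed
    also have "\<dots> = C'' / (1 - \<alpha>) * inverse (X * real T)"
    proof -
      define A where "A = real T - real t + 1"
      have "A > 0" "real T > 0" "1 - \<alpha> > 0" using tpos a1 unfolding A_def by auto
      then show ?thesis using Tpos unfolding A_def[symmetric] by (simp add: field_simps)
    qed
    also have "X * real T = real T powr (1 - \<alpha>)"
    proof -
      have "real T > 0" using tpos by linarith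
      then show ?thesis unfolding X_def by (simp add: powr_diff powr_minus field_simps)
    qed
    also have "inverse (real T powr (1 - \<alpha>)) = real T powr (\<alpha> - 1)"
      using tpos by (simp add: powr_minus[symmetric])
    finally show ?thesis using q0 by simp
  qed
  show ?thesis using S1 main by blast
qed

lemma tower:
  fixes M :: "'a measure" and F :: "'a measure" and Wsp :: "'w measure"
  assumes M: "prob_space M" and sub: "subalgebra M F"
    and W: "W \<in> measurable M Wsp" and P: "P \<in> measurable F (prob_algebra Wsp)"
    and law: "\<forall>A\<in>sets Wsp. \<forall>E\<in>sets F. measure M ({\<omega>\<in>space M. W \<omega> \<in> A} \<inter> E)
                  = (\<integral>\<omega>. indicator E \<omega> * measure (P \<omega>) A \<partial>M)"
    and g: "(\<lambda>(\<omega>, w). g \<omega> w) \<in> borel_measurable (F \<Otimes>\<^sub>M Wsp)"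
  shows "(\<integral>\<^sup>+\<omega>. g \<omega> (W \<omega>) \<partial>M) = (\<integral>\<^sup>+\<omega>. \<integral>\<^sup>+w. g \<omega> w \<partial>P \<omega> \<partial>M)"
proof -
  interpret prob_space M by (rule M)
  define Fm where "Fm = restr_to_subalg M F"
  have sFm: "sets Fm = sets F" unfolding Fm_def using sub by (rule sets_restr_to_subalg)
  have spFm: "space Fm = space M" unfolding Fm_def by (rule space_restr_to_subalg)
  have spF: "space F = space M" "sets F \<subseteq> sets M" using sub unfolding subalgebra_def by auto
  have ne: "space Fm \<noteq> {}" using spFm not_empty by simp
  have idm: "(\<lambda>\<omega>. \<omega>) \<in> measurable M Fm"
    unfolding measurable_def using sFm spFm spF sets.Int_space_eq2 by auto
  have PW: "(\<lambda>\<omega>. (\<omega>, W \<omega>)) \<in> measurable M (Fm \<Otimes>\<^sub>M Wsp)"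
    by (rule measurable_Pair[OF idm W])
  have PF: "P \<in> measurable Fm (subprob_algebra Wsp)"
    using measurable_prob_algebraD[OF P] by (simp cong: measurable_cong_sets add: sFm)
  have PFP: "P \<in> measurable F (subprob_algebra Wsp)"
    using measurable_prob_algebraD[OF P] .
  have Pprob: "prob_space (P \<omega>)" "sets (P \<omega>) = sets Wsp" "space (P \<omega>) = space Wsp" if "\<omega> \<in> space M" for \<omega>
  proof -
    have "P \<omega> \<in> space (prob_algebra Wsp)" using measurable_space[OF P] that spF by auto
    then show "prob_space (P \<omega>)" "sets (P \<omega>) = sets Wsp"
      by (auto simp: space_prob_algebra)
    then show "space (P \<omega>) = space Wsp" by (metis sets_eq_imp_space_eq)
  qed
  define K where "K \<omega> = distr (P \<omega>) (Fm \<Otimes>\<^sub>M Wsp) (Pair \<omega>)" for \<omega>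
  have idpair: "case_prod Pair \<in> measurable (Fm \<Otimes>\<^sub>M Wsp) (Fm \<Otimes>\<^sub>M Wsp)"
    by simp
  have K: "K \<in> measurable Fm (subprob_algebra (Fm \<Otimes>\<^sub>M Wsp))"
    unfolding K_def by (rule measurable_distr2[OF idpair PF])
  have PairM: "Pair \<omega> \<in> measurable (P \<omega>) (Fm \<Otimes>\<^sub>M Wsp)" if "\<omega> \<in> space M" for \<omega>
    using measurable_Pair1'[of \<omega> Fm Wsp] that spFm Pprob[OF that]
    by (simp cong: measurable_cong_sets)
  define \<mu>1 where "\<mu>1 = distr M (Fm \<Otimes>\<^sub>M Wsp) (\<lambda>\<omega>. (\<omega>, W \<omega>))"
  define \<mu>2 where "\<mu>2 = Fm \<bind> K"
  have sK: "sets (K \<omega>) = sets (Fm \<Otimes>\<^sub>M Wsp)" if "\<omega> \<in> space Fm" for \<omega>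
    unfolding K_def by simp
  have eq: "\<mu>1 = \<mu>2"
  proof (rule measure_eqI_generator_eq[OF Int_stable_pair_measure_generator[of Fm Wsp] pair_measure_closed])
    show "sets \<mu>1 = sigma_sets (space Fm \<times> space Wsp) {a \<times> b |a b. a \<in> sets Fm \<and> b \<in> sets Wsp}"
      unfolding \<mu>1_def by (simp add: sets_pair_measure)
    show "sets \<mu>2 = sigma_sets (space Fm \<times> space Wsp) {a \<times> b |a b. a \<in> sets Fm \<and> b \<in> sets Wsp}"
      unfolding \<mu>2_def using sets_bind[of Fm K "Fm \<Otimes>\<^sub>M Wsp", OF sK ne] by (simp add: sets_pair_measure)
    show "range (\<lambda>_. space Fm \<times> space Wsp) \<subseteq> {a \<times> b |a b. a \<in> sets Fm \<and> b \<in> sets Wsp}"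
      by blast
    show "(\<Union>i::nat. space Fm \<times> space Wsp) = space Fm \<times> space Wsp" by simp
    show "emeasure \<mu>1 (space Fm \<times> space Wsp) \<noteq> \<infinity>" for i :: nat
      unfolding \<mu>1_def using PW by (simp add: emeasure_distr space_pair_measure[symmetric])
  next
    fix X assume "X \<in> {a \<times> b |a b. a \<in> sets Fm \<and> b \<in> sets Wsp}"
    then obtain a b where X: "X = a \<times> b" and a: "a \<in> sets F" and b: "b \<in> sets Wsp"
      using sFm by auto
    have aM: "a \<subseteq> space M" using a spF sets.sets_into_space by blast
    have Xs: "X \<in> sets (Fm \<Otimes>\<^sub>M Wsp)" using X a b sFm by auto
    define f where "f \<omega> = indicator a \<omega> * measure (P \<omega>) b" for \<omega>
    have fF: "f \<in> borel_measurable F"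
      unfolding f_def using a measurable_compose[OF P measurable_measure_prob_algebra[OF b]]
      by measurable
    have fM: "f \<in> borel_measurable M" using measurable_from_subalg[OF sub fF] .
    have fb: "0 \<le> f \<omega> \<and> f \<omega> \<le> 1" if "\<omega> \<in> space M" for \<omega>
    proof -
      interpret p: prob_space "P \<omega>" using Pprob[OF that] by simp
      show ?thesis unfolding f_def by (auto simp: indicator_def)
    qed
    have fint: "integrable M f"
      by (rule integrable_const_bound[where B=1]) (use fb fM in auto)
    have "emeasure \<mu>1 X = emeasure M ((\<lambda>\<omega>. (\<omega>, W \<omega>)) -` X \<inter> space M)"
      unfolding \<mu>1_def using PW Xs by (simp add: emeasure_distr)
    also have "(\<lambda>\<omega>. (\<omega>, W \<omega>)) -` X \<inter> space M = {\<omega>\<in>space M. W \<omega> \<in> b} \<inter> a"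
      using X aM by auto
    also have "emeasure M ({\<omega>\<in>space M. W \<omega> \<in> b} \<inter> a) = ennreal (measure M ({\<omega>\<in>space M. W \<omega> \<in> b} \<inter> a))"
      by (simp add: emeasure_eq_measure)
    also have "\<dots> = ennreal (\<integral>\<omega>. f \<omega> \<partial>M)" using law a b unfolding f_def by simp
    also have "\<dots> = (\<integral>\<^sup>+\<omega>. ennreal (f \<omega>) \<partial>M)"
      by (rule nn_integral_eq_integral[symmetric]) (use fint fb in auto)
    also have "\<dots> = (\<integral>\<^sup>+\<omega>. ennreal (f \<omega>) \<partial>Fm)"
      unfolding Fm_def by (rule nn_integral_subalgebra2[symmetric, OF sub]) (use fF in simp)
    also have "\<dots> = (\<integral>\<^sup>+\<omega>. emeasure (K \<omega>) X \<partial>Fm)"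
    proof (rule nn_integral_cong)
      fix \<omega> assume w: "\<omega> \<in> space Fm"
      then have wM: "\<omega> \<in> space M" using spFm by simp
      interpret p: prob_space "P \<omega>" using Pprob[OF wM] by simp
      have "emeasure (K \<omega>) X = emeasure (P \<omega>) (Pair \<omega> -` X \<inter> space (P \<omega>))"
        unfolding K_def using PairM[OF wM] Xs by (simp add: emeasure_distr)
      also have "Pair \<omega> -` X \<inter> space (P \<omega>) = (if \<omega> \<in> a then b else {})"
        using X Pprob(3)[OF wM] b sets.sets_into_space by auto
      finally show "ennreal (f \<omega>) = emeasure (K \<omega>) X"
        unfolding f_def by (simp add: indicator_def p.emeasure_eq_measure)
    qed
    also have "\<dots> = emeasure \<mu>2 X"
      unfolding \<mu>2_def by (rule emeasure_bind[symmetric, OF ne K Xs])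
    finally show "emeasure \<mu>1 X = emeasure \<mu>2 X" .
  qed
  have gFm: "(\<lambda>(\<omega>, w). g \<omega> w) \<in> borel_measurable (Fm \<Otimes>\<^sub>M Wsp)"
    using g by (simp cong: measurable_cong_sets add: sFm)
  have inner: "(\<lambda>\<omega>. \<integral>\<^sup>+w. g \<omega> w \<partial>P \<omega>) \<in> borel_measurable F"
    by (rule nn_integral_measurable_subprob_algebra2[OF g PFP])
  have "(\<integral>\<^sup>+\<omega>. g \<omega> (W \<omega>) \<partial>M) = (\<integral>\<^sup>+x. (\<lambda>(\<omega>, w). g \<omega> w) x \<partial>\<mu>1)"
    unfolding \<mu>1_def by (subst nn_integral_distr[OF PW]) (use gFm in auto)
  also have "\<dots> = (\<integral>\<^sup>+x. (\<lambda>(\<omega>, w). g \<omega> w) x \<partial>\<mu>2)" using eq by simp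
  also have "\<dots> = (\<integral>\<^sup>+\<omega>. \<integral>\<^sup>+x. (\<lambda>(\<omega>, w). g \<omega> w) x \<partial>K \<omega> \<partial>Fm)"
    unfolding \<mu>2_def by (rule nn_integral_bind[OF gFm K])
  also have "\<dots> = (\<integral>\<^sup>+\<omega>. \<integral>\<^sup>+w. g \<omega> w \<partial>P \<omega> \<partial>Fm)"
  proof (rule nn_integral_cong)
    fix \<omega> assume w: "\<omega> \<in> space Fm"
    then have wM: "\<omega> \<in> space M" using spFm by simp
    show "(\<integral>\<^sup>+x. (\<lambda>(\<omega>, w). g \<omega> w) x \<partial>K \<omega>) = (\<integral>\<^sup>+w. g \<omega> w \<partial>P \<omega>)"
      unfolding K_def by (subst nn_integral_distr[OF PairM[OF wM]]) (use gFm in auto)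
  qed
  also have "\<dots> = (\<integral>\<^sup>+\<omega>. \<integral>\<^sup>+w. g \<omega> w \<partial>P \<omega> \<partial>M)"
    unfolding Fm_def by (rule nn_integral_subalgebra2[OF sub inner])
  finally show ?thesis .
qed

lemma hist_gen_Pow:
  "{(\<lambda>\<omega>. (Y s (W s \<omega>) \<omega>, W s \<omega>)) -` A \<inter> space M | s A.
        s \<in> {1..t} \<and> A \<in> sets (borel \<Otimes>\<^sub>M Wsp)} \<subseteq> Pow (space M)"
  by auto

lemma hist_space: "space (hist M Wsp Y W n) = space M"
  unfolding hist_def by (rule space_measure_of[OF hist_gen_Pow])

lemma hist_sets: "sets (hist M Wsp Y W n) = sigma_sets (space M) {(\<lambda>\<omega>. (Y s (W s \<omega>) \<omega>, W s \<omega>)) -` A \<inter> space M | s A.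
        s \<in> {1..n} \<and> A \<in> sets (borel \<Otimes>\<^sub>M Wsp)}"
  unfolding hist_def by (rule sets_measure_of[OF hist_gen_Pow])

lemma hist_sub:
  assumes W_meas: "\<forall>t\<ge>1. W t \<in> measurable M Wsp"
    and Yobs_meas: "\<forall>t\<ge>1. (\<lambda>\<omega>. Y t (W t \<omega>) \<omega>) \<in> borel_measurable M"
  shows "subalgebra M (hist M Wsp Y W n)"
  unfolding subalgebra_def
proof
  show "space (hist M Wsp Y W n) = space M" by (rule hist_space)
  have "{(\<lambda>\<omega>. (Y s (W s \<omega>) \<omega>, W s \<omega>)) -` A \<inter> space M | s A.
        s \<in> {1..n} \<and> A \<in> sets (borel \<Otimes>\<^sub>M Wsp)} \<subseteq> sets M"
  proof safe
    fix s and A :: "(real \<times> _) set" assume s: "s \<in> {1..n}" and A: "A \<in> sets (borel \<Otimes>\<^sub>M Wsp)"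
    have "(\<lambda>\<omega>. (Y s (W s \<omega>) \<omega>, W s \<omega>)) \<in> measurable M (borel \<Otimes>\<^sub>M Wsp)"
      using s W_meas Yobs_meas by (intro measurable_Pair) auto
    then show "(\<lambda>\<omega>. (Y s (W s \<omega>) \<omega>, W s \<omega>)) -` A \<inter> space M \<in> sets M"
      using A by (rule measurable_sets)
  qed
  then show "sets (hist M Wsp Y W n) \<subseteq> sets M"
    unfolding hist_sets by (rule sets.sigma_sets_subset)
qed

lemma hist_mono:
  assumes nm: "n \<le> m" shows "subalgebra (hist M Wsp Y W m) (hist M Wsp Y W n)"
  unfolding subalgebra_def hist_space hist_sets
proof (intro conjI refl sigma_sets_mono' subsetI)
  fix x assume "x \<in> {(\<lambda>\<omega>. (Y s (W s \<omega>) \<omega>, W s \<omega>)) -` A \<inter> space M | s A.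
        s \<in> {1..n} \<and> A \<in> sets (borel \<Otimes>\<^sub>M Wsp)}"
  then obtain s A where x: "x = (\<lambda>\<omega>. (Y s (W s \<omega>) \<omega>, W s \<omega>)) -` A \<inter> space M"
    and s: "s \<in> {1..n}" and A: "A \<in> sets (borel \<Otimes>\<^sub>M Wsp)" by blast
  have "s \<in> {1..m}" using s nm by auto
  then show "x \<in> {(\<lambda>\<omega>. (Y s (W s \<omega>) \<omega>, W s \<omega>)) -` A \<inter> space M | s A.
        s \<in> {1..m} \<and> A \<in> sets (borel \<Otimes>\<^sub>M Wsp)}" using x A by blast
qed

lemma hist_fut_sets: "sets (hist M Wsp Y W (t - 1)) \<subseteq> sets (hist_fut M Wsp Y W t)"
proof -
  have G: "sets (hist M Wsp Y W (t - 1)) \<union>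
      {Y s w -` B \<inter> space M | s w B. t \<le> s \<and> w \<in> space Wsp \<and> B \<in> sets borel} \<subseteq> Pow (space M)"
    using sets.sets_into_space[of _ "hist M Wsp Y W (t - 1)"] hist_space[of M Wsp Y W "t - 1"] by auto
  show ?thesis unfolding hist_fut_def sets_measure_of[OF G] by auto
qed

lemma ident_subalg: "subalgebra M F \<Longrightarrow> (\<lambda>x. x) \<in> measurable M F"
  unfolding measurable_def subalgebra_def using sets.Int_space_eq2 by fastforce

theorem theorem5:
  fixes M :: "'a measure" and Wsp :: "'w measure"
    and Y :: "nat \<Rightarrow> 'w \<Rightarrow> 'a \<Rightarrow> real" and W :: "nat \<Rightarrow> 'a \<Rightarrow> 'w"
    and P :: "nat \<Rightarrow> 'a \<Rightarrow> 'w measure"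
    and \<psi> :: "('w \<Rightarrow> real) \<Rightarrow> real"
    and \<gamma> :: "nat \<Rightarrow> 'a \<Rightarrow> 'w \<Rightarrow> real"
    and lam :: "nat \<Rightarrow> nat \<Rightarrow> 'a \<Rightarrow> real" and h :: "nat \<Rightarrow> nat \<Rightarrow> 'a \<Rightarrow> real"
    and \<delta> \<alpha> b C C' C'' :: real
  assumes prob: "prob_space M"
    and W_meas: "\<forall>t\<ge>1. W t \<in> measurable M Wsp"
    and Y_meas: "\<forall>t\<ge>1. \<forall>w\<in>space Wsp. Y t w \<in> borel_measurable M"
    and Yobs_meas: "\<forall>t\<ge>1. (\<lambda>\<omega>. Y t (W t \<omega>) \<omega>) \<in> borel_measurable M"
    and Y_indep: "prob_space.indep_vars M (\<lambda>_. Pi\<^sub>M (space Wsp) (\<lambda>_. borel :: real measure))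
                    (\<lambda>t \<omega>. restrict (\<lambda>w. Y t w \<omega>) (space Wsp)) {1..}"
    and Y_ident: "\<forall>t\<ge>1. distr M (Pi\<^sub>M (space Wsp) (\<lambda>_. borel :: real measure))
                             (\<lambda>\<omega>. restrict (\<lambda>w. Y t w \<omega>) (space Wsp))
                        = distr M (Pi\<^sub>M (space Wsp) (\<lambda>_. borel :: real measure))
                             (\<lambda>\<omega>. restrict (\<lambda>w. Y 1 w \<omega>) (space Wsp))"
    and Y_mom: "\<exists>vl vu K. 0 < vl \<and> (\<forall>t\<ge>1. \<forall>w\<in>space Wsp.
                  integrable M (\<lambda>\<omega>. (Y t w \<omega>)\<^sup>2) \<and>
                  vl \<le> (\<integral>\<omega>. (Y t w \<omega> - (\<integral>\<omega>'. Y t w \<omega>' \<partial>M))\<^sup>2 \<partial>M) \<and>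
                  (\<integral>\<omega>. (Y t w \<omega> - (\<integral>\<omega>'. Y t w \<omega>' \<partial>M))\<^sup>2 \<partial>M) \<le> vu \<and>
                  (\<integral>\<^sup>+\<omega>. ennreal (\<bar>Y t w \<omega>\<bar> powr (2 + \<delta>)) \<partial>M) \<le> ennreal K)"
    and P_kernel: "\<forall>t\<ge>1. P t \<in> measurable (hist M Wsp Y W (t - 1)) (prob_algebra Wsp)"
    and P_law: "\<forall>t\<ge>1. \<forall>A\<in>sets Wsp. \<forall>E\<in>sets (hist_fut M Wsp Y W t).
                  measure M ({\<omega>\<in>space M. W t \<omega> \<in> A} \<inter> E)
                  = (\<integral>\<omega>. indicator E \<omega> * measure (P t \<omega>) A \<partial>M)"
    and psi_linear: "\<forall>f g a c. \<psi> (\<lambda>w. a * f w + c * g w) = a * \<psi> f + c * \<psi> g"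
    and psi_cont: "\<forall>t\<ge>1. \<forall>\<omega>\<in>space M. \<exists>c. \<forall>f\<in>L2k (P t \<omega>).
                     \<bar>\<psi> f\<bar> \<le> c * sqrt (\<integral>w. (f w)\<^sup>2 \<partial>P t \<omega>)"
    and gamma_meas: "\<forall>t\<ge>1. (\<lambda>(\<omega>, w). \<gamma> t \<omega> w)
                       \<in> borel_measurable (hist M Wsp Y W (t - 1) \<Otimes>\<^sub>M Wsp)"
    and riesz: "\<forall>t\<ge>1. \<forall>\<omega>\<in>space M. \<gamma> t \<omega> \<in> L2k (P t \<omega>) \<and>
                  (\<forall>f\<in>L2k (P t \<omega>). (\<integral>w. \<gamma> t \<omega> w * f w \<partial>P t \<omega>) = \<psi> f)"
    and b_pos: "0 < b"
    and gamma_lower: "\<forall>t\<ge>1. \<forall>\<omega>\<in>space M. (\<integral>w. (\<gamma> t \<omega> w)\<^sup>2 \<partial>P t \<omega>) > b"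
    and delta_pos: "0 < \<delta>" and alpha_nonneg: "0 \<le> \<alpha>" and alpha_lt: "\<alpha> < \<delta> / (2 + \<delta>)"
    and C_pos: "0 < C" and C'_pos: "0 < C'" and C''_pos: "0 < C''"
    and gamma_ratio: "\<forall>t\<ge>1. \<forall>\<omega>\<in>space M.
                  integrable (P t \<omega>) (\<lambda>w. \<bar>\<gamma> t \<omega> w\<bar> powr (2 + \<delta>)) \<and>
                  (\<integral>w. \<bar>\<gamma> t \<omega> w\<bar> powr (2 + \<delta>) \<partial>P t \<omega>)
                    / (\<integral>w. (\<gamma> t \<omega> w)\<^sup>2 \<partial>P t \<omega>) powr (2 + \<delta>) \<le> C"
    and gamma_upper: "\<forall>t\<ge>1. \<forall>\<omega>\<in>space M.
                  (\<integral>w. (\<gamma> t \<omega> w)\<^sup>2 \<partial>P t \<omega>) \<le> C' * real t powr \<alpha>"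
    and lam_meas: "\<forall>T. \<forall>t\<in>{1..T}. lam T t \<in> borel_measurable (hist M Wsp Y W (t - 1))"
    and lam_lt1: "\<forall>T. \<forall>t\<in>{1..<T}. \<forall>\<omega>\<in>space M. lam T t \<omega> < 1"
    and lam_last: "\<forall>T\<ge>1. \<forall>\<omega>\<in>space M. lam T T \<omega> = 1"
    and lam_bounds: "\<forall>T. \<forall>t\<in>{1..T}. \<forall>\<omega>\<in>space M.
                  1 / (1 + real T - real t) \<le> lam T t \<omega> \<and>
                  lam T t \<omega> \<le> C'' * inverse (\<integral>w. (\<gamma> t \<omega> w)\<^sup>2 \<partial>P t \<omega>)
                     / (real t powr (- \<alpha>) + real T powr (1 - \<alpha>) - real t powr (1 - \<alpha>))"
    and h_rec: "\<forall>T. \<forall>t\<in>{1..T}. \<forall>\<omega>\<in>space M. 0 \<le> h T t \<omega> \<and>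
                  (h T t \<omega>)\<^sup>2 * (\<integral>w. (\<gamma> t \<omega> w)\<^sup>2 \<partial>P t \<omega>)
                  = (1 - (\<Sum>s\<in>{1..<t}. (h T s \<omega>)\<^sup>2 * (\<integral>w. (\<gamma> s \<omega> w)\<^sup>2 \<partial>P s \<omega>))) * lam T t \<omega>"
  shows "conv_prob_infty M (\<lambda>T \<omega>. (\<Sum>t=1..T. h T t \<omega>)\<^sup>2
            / (\<integral>\<omega>'. (\<Sum>t=1..T. (h T t \<omega>')\<^sup>2 * (\<gamma> t \<omega>' (W t \<omega>'))\<^sup>2) \<partial>M))
       \<and> (\<exists>p>1. conv_Lp M p (\<lambda>T \<omega>. (\<Sum>t=1..T. (h T t \<omega>)\<^sup>2 * (\<integral>w. (\<gamma> t \<omega> w)\<^sup>2 \<partial>P t \<omega>))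
            / (\<integral>\<omega>'. (\<Sum>t=1..T. (h T t \<omega>')\<^sup>2 * (\<gamma> t \<omega>' (W t \<omega>'))\<^sup>2) \<partial>M)) 1)
       \<and> conv_prob M (\<lambda>T \<omega>. (\<Sum>t=1..T. h T t \<omega> powr (2 + \<delta>)
                                  * (\<integral>w. \<bar>\<gamma> t \<omega> w\<bar> powr (2 + \<delta>) \<partial>P t \<omega>))
            / (\<integral>\<omega>'. (\<Sum>t=1..T. (h T t \<omega>')\<^sup>2 * (\<gamma> t \<omega>' (W t \<omega>'))\<^sup>2) \<partial>M) powr (1 + \<delta> / 2)) 0"
proof -
  interpret prob_space M by (rule prob)
  define H where "H t = hist M Wsp Y W (t - 1)" for t
  define v where "v t \<omega> = (\<integral>w. (\<gamma> t \<omega> w)\<^sup>2 \<partial>P t \<omega>)" for t \<omega>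
  define e where "e t \<omega> = (\<integral>w. \<bar>\<gamma> t \<omega> w\<bar> powr (2 + \<delta>) \<partial>P t \<omega>)" for t \<omega>
  define q where "q T t \<omega> = (h T t \<omega>)\<^sup>2 * v t \<omega>" for T t \<omega>
  define K0 where "K0 = C'' / (1 - \<alpha>)"
  have a1: "\<alpha> < 1"
  proof -
    have "\<delta> / (2 + \<delta>) < 1" using delta_pos by simp
    then show ?thesis using alpha_lt by linarith
  qed
  have K0pos: "K0 > 0" unfolding K0_def using a1 C''_pos by simp
  have subH: "subalgebra M (H t)" for t
    unfolding H_def by (rule hist_sub) (fact W_meas, fact Yobs_meas)
  have monoH: "subalgebra (H t) (H s)" if "s \<le> t" for s t
    unfolding H_def by (rule hist_mono) (use that in simp)
  have spH: "space (H t) = space M" for t unfolding H_def by (rule hist_space)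
  have Pt: "P t \<in> measurable (H t) (prob_algebra Wsp)" if "t \<ge> 1" for t
    using P_kernel that unfolding H_def by blast
  have Pprob: "prob_space (P t \<omega>) \<and> sets (P t \<omega>) = sets Wsp" if "t \<ge> 1" "\<omega> \<in> space M" for t \<omega>
  proof -
    have "P t \<omega> \<in> space (prob_algebra Wsp)" using measurable_space[OF Pt[OF that(1)]] that(2) spH by auto
    then show ?thesis by (auto simp: space_prob_algebra)
  qed
  have gmeas: "(\<lambda>(\<omega>, w). \<gamma> t \<omega> w) \<in> borel_measurable (H t \<Otimes>\<^sub>M Wsp)" if "t \<ge> 1" for t
    using gamma_meas that unfolding H_def by blast
  have gP: "\<gamma> t \<omega> \<in> borel_measurable (P t \<omega>) \<and> integrable (P t \<omega>) (\<lambda>w. (\<gamma> t \<omega> w)\<^sup>2)"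
    if "t \<ge> 1" "\<omega> \<in> space M" for t \<omega>
    using riesz that unfolding L2k_def by blast
  have vmeas: "v t \<in> borel_measurable (H t)" if t1: "t \<ge> 1" for t
  proof -
    note gmeas[OF t1, measurable]
    have m1: "(\<lambda>(\<omega>, w). ennreal ((\<gamma> t \<omega> w)\<^sup>2)) \<in> borel_measurable (H t \<Otimes>\<^sub>M Wsp)"
      by measurable
    have "(\<lambda>\<omega>. \<integral>\<^sup>+w. ennreal ((\<gamma> t \<omega> w)\<^sup>2) \<partial>P t \<omega>) \<in> borel_measurable (H t)"
      by (rule nn_integral_measurable_subprob_algebra2[OF m1 measurable_prob_algebraD[OF Pt[OF t1]]])
    then have "(\<lambda>\<omega>. enn2real (\<integral>\<^sup>+w. ennreal ((\<gamma> t \<omega> w)\<^sup>2) \<partial>P t \<omega>)) \<in> borel_measurable (H t)"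
      by measurable
    moreover have "v t \<omega> = enn2real (\<integral>\<^sup>+w. ennreal ((\<gamma> t \<omega> w)\<^sup>2) \<partial>P t \<omega>)" if "\<omega> \<in> space (H t)" for \<omega>
    proof -
      have w: "\<omega> \<in> space M" using that spH by simp
      note gP[OF t1 w, THEN conjunct1, measurable]
      show ?thesis unfolding v_def by (rule integral_eq_nn_integral) auto
    qed
    ultimately show ?thesis by (simp cong: measurable_cong)
  qed
  have emeas: "e t \<in> borel_measurable (H t)" if t1: "t \<ge> 1" for t
  proof -
    note gmeas[OF t1, measurable]
    have m1: "(\<lambda>(\<omega>, w). ennreal (\<bar>\<gamma> t \<omega> w\<bar> powr (2 + \<delta>))) \<in> borel_measurable (H t \<Otimes>\<^sub>M Wsp)"
      by measurable
    have "(\<lambda>\<omega>. \<integral>\<^sup>+w. ennreal (\<bar>\<gamma> t \<omega> w\<bar> powr (2 + \<delta>)) \<partial>P t \<omega>) \<in> borel_measurable (H t)"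
      by (rule nn_integral_measurable_subprob_algebra2[OF m1 measurable_prob_algebraD[OF Pt[OF t1]]])
    then have "(\<lambda>\<omega>. enn2real (\<integral>\<^sup>+w. ennreal (\<bar>\<gamma> t \<omega> w\<bar> powr (2 + \<delta>)) \<partial>P t \<omega>)) \<in> borel_measurable (H t)"
      by measurable
    moreover have "e t \<omega> = enn2real (\<integral>\<^sup>+w. ennreal (\<bar>\<gamma> t \<omega> w\<bar> powr (2 + \<delta>)) \<partial>P t \<omega>)" if "\<omega> \<in> space (H t)" for \<omega>
    proof -
      have w: "\<omega> \<in> space M" using that spH by simp
      note gP[OF t1 w, THEN conjunct1, measurable]
      show ?thesis unfolding e_def by (rule integral_eq_nn_integral) auto
    qed
    ultimately show ?thesis by (simp cong: measurable_cong)
  qed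
  have vpos: "v t \<omega> > b" "v t \<omega> > 0" if "t \<ge> 1" "\<omega> \<in> space M" for t \<omega>
    using gamma_lower that b_pos unfolding v_def by force+
  have vup: "v t \<omega> \<le> C' * real t powr \<alpha>" if "t \<ge> 1" "\<omega> \<in> space M" for t \<omega>
    using gamma_upper that unfolding v_def by blast
  have ebound: "e t \<omega> \<le> C * v t \<omega> powr (2 + \<delta>)" if "t \<ge> 1" "\<omega> \<in> space M" for t \<omega>
  proof -
    have "e t \<omega> / v t \<omega> powr (2 + \<delta>) \<le> C" using gamma_ratio that unfolding e_def v_def by blast
    moreover have "v t \<omega> powr (2 + \<delta>) > 0" using vpos[OF that] by simp
    ultimately show ?thesis by (simp add: pos_divide_le_eq)
  qed
  have hmeas: "t \<in> {1..T} \<longrightarrow> h T t \<in> borel_measurable (H t)" for T t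
  proof (induction t rule: less_induct)
    case (less t)
    show ?case
    proof
      assume t: "t \<in> {1..T}"
      have hs: "h T s \<in> borel_measurable (H t)" if "s \<in> {1..<t}" for s
        using less.IH[of s] that t measurable_from_subalg[OF monoH[of s t]] by auto
      have vs: "v s \<in> borel_measurable (H t)" if "s \<in> {1..<t}" for s
        using vmeas[of s] that measurable_from_subalg[OF monoH[of s t]] by auto
      have S: "(\<lambda>\<omega>. \<Sum>s\<in>{1..<t}. (h T s \<omega>)\<^sup>2 * v s \<omega>) \<in> borel_measurable (H t)"
        by (rule borel_measurable_sum) (intro borel_measurable_times borel_measurable_power hs vs; simp)
      have lm: "lam T t \<in> borel_measurable (H t)" using lam_meas t unfolding H_def by blast
      have f: "(\<lambda>\<omega>. sqrt ((1 - (\<Sum>s\<in>{1..<t}. (h T s \<omega>)\<^sup>2 * v s \<omega>)) * lam T t \<omega> / v t \<omega>)) \<in> borel_measurable (H t)"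
      proof -
        have "t \<ge> 1" using t by simp
        note [measurable] = S lm vmeas[OF this]
        show ?thesis by measurable
      qed
      have eq: "h T t \<omega> = sqrt ((1 - (\<Sum>s\<in>{1..<t}. (h T s \<omega>)\<^sup>2 * v s \<omega>)) * lam T t \<omega> / v t \<omega>)"
        if "\<omega> \<in> space (H t)" for \<omega>
      proof -
        have w: "\<omega> \<in> space M" using that spH by simp
        have vp: "v t \<omega> > 0" using vpos[of t \<omega>] w t by auto
        have hr: "0 \<le> h T t \<omega>" "(h T t \<omega>)\<^sup>2 * v t \<omega> = (1 - (\<Sum>s\<in>{1..<t}. (h T s \<omega>)\<^sup>2 * v s \<omega>)) * lam T t \<omega>"
          using h_rec t w unfolding v_def by blast+
        then have "(h T t \<omega>)\<^sup>2 = (1 - (\<Sum>s\<in>{1..<t}. (h T s \<omega>)\<^sup>2 * v s \<omega>)) * lam T t \<omega> / v t \<omega>"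
          using vp by (simp add: field_simps)
        then show ?thesis using hr(1) by (metis real_sqrt_unique)
      qed
      show "h T t \<in> borel_measurable (H t)" using f eq by (simp cong: measurable_cong)
    qed
  qed
  have hM: "h T t \<in> borel_measurable M" if "t \<in> {1..T}" for T t
    using hmeas[of t T] that measurable_from_subalg[OF subH] by blast
  have vM: "v t \<in> borel_measurable M" if "t \<ge> 1" for t
    using vmeas[OF that] measurable_from_subalg[OF subH] by blast
  have eM: "e t \<in> borel_measurable M" if "t \<ge> 1" for t
    using emeas[OF that] measurable_from_subalg[OF subH] by blast
  have qM: "q T t \<in> borel_measurable M" if "t \<in> {1..T}" for T t
  proof -
    have "t \<ge> 1" using that by simp
    note [measurable] = hM[OF that] vM[OF this]
    show ?thesis unfolding q_def by measurable
  qed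
  have det: "(\<Sum>t=1..T. q T t \<omega>) = 1 \<and> (\<forall>t\<in>{1..T}. 0 \<le> q T t \<omega> \<and> q T t \<omega> * v t \<omega> \<le> K0 * real T powr (\<alpha> - 1))"
    if T1: "T \<ge> 1" and w: "\<omega> \<in> space M" for T \<omega>
    unfolding K0_def
  proof (rule key_det[where lam="\<lambda>t. lam T t \<omega>" and v="\<lambda>t. v t \<omega>" and q="\<lambda>t. q T t \<omega>", OF T1 alpha_nonneg a1 C''_pos])
    show "\<forall>t\<in>{1..T}. 0 < v t \<omega>" using vpos w by auto
    show "\<forall>t\<in>{1..<T}. lam T t \<omega> < 1" using lam_lt1 w by blast
    show "lam T T \<omega> = 1" using lam_last w T1 by blast
    show "\<forall>t\<in>{1..T}. 1 / (1 + real T - real t) \<le> lam T t \<omega> \<and>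
       lam T t \<omega> \<le> C'' * inverse (v t \<omega>) / (real t powr - \<alpha> + real T powr (1 - \<alpha>) - real t powr (1 - \<alpha>))"
      using lam_bounds w unfolding v_def by blast
    show "\<forall>t\<in>{1..T}. q T t \<omega> = (1 - (\<Sum>s\<in>{1..<t}. q T s \<omega>)) * lam T t \<omega>"
      using h_rec w unfolding q_def v_def by blast
  qed
  have q01: "0 \<le> q T t \<omega> \<and> q T t \<omega> \<le> 1" if "t \<in> {1..T}" "\<omega> \<in> space M" for T t \<omega>
  proof -
    have T1: "T \<ge> 1" using that by auto
    note d = det[OF T1 that(2)]
    have "q T t \<omega> \<le> (\<Sum>t=1..T. q T t \<omega>)"
      by (rule member_le_sum) (use d that in auto)
    then show ?thesis using d that by auto
  qed
  have qint: "integrable M (q T t)" if "t \<in> {1..T}" for T t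
    by (rule integrable_const_bound[where B=1]) (use qM[OF that] q01[OF that] in auto)
  have den: "(\<integral>\<omega>. (\<Sum>t=1..T. (h T t \<omega>)\<^sup>2 * (\<gamma> t \<omega> (W t \<omega>))\<^sup>2) \<partial>M) = 1" if T1: "T \<ge> 1" for T
  proof -
    have each: "has_bochner_integral M (\<lambda>\<omega>. (h T t \<omega>)\<^sup>2 * (\<gamma> t \<omega> (W t \<omega>))\<^sup>2) (\<integral>\<omega>. q T t \<omega> \<partial>M)"
      if t: "t \<in> {1..T}" for t
    proof -
      have t1: "t \<ge> 1" using t by simp
      have idm: "(\<lambda>\<omega>. \<omega>) \<in> measurable M (H t)" by (rule ident_subalg[OF subH])
      have Wt: "W t \<in> measurable M Wsp" using W_meas t1 by blast
      have PW: "(\<lambda>\<omega>. (\<omega>, W t \<omega>)) \<in> measurable M (H t \<Otimes>\<^sub>M Wsp)"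
        using idm Wt by (intro measurable_Pair) auto
      note [measurable] = gmeas[OF t1] hmeas[of t T, THEN mp, OF t]
      have gr: "(\<lambda>(\<omega>, w). (h T t \<omega>)\<^sup>2 * (\<gamma> t \<omega> w)\<^sup>2) \<in> borel_measurable (H t \<Otimes>\<^sub>M Wsp)"
        by measurable
      have ge: "(\<lambda>(\<omega>, w). ennreal ((h T t \<omega>)\<^sup>2 * (\<gamma> t \<omega> w)\<^sup>2)) \<in> borel_measurable (H t \<Otimes>\<^sub>M Wsp)"
        by measurable
      have fM: "(\<lambda>\<omega>. (h T t \<omega>)\<^sup>2 * (\<gamma> t \<omega> (W t \<omega>))\<^sup>2) \<in> borel_measurable M"
        using measurable_compose[OF PW gr] by simp
      have law: "\<forall>A\<in>sets Wsp. \<forall>E\<in>sets (H t). measure M ({\<omega>\<in>space M. W t \<omega> \<in> A} \<inter> E)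
                  = (\<integral>\<omega>. indicator E \<omega> * measure (P t \<omega>) A \<partial>M)"
        using P_law t1 hist_fut_sets[of M Wsp Y W t] unfolding H_def by blast
      have "(\<integral>\<^sup>+\<omega>. ennreal ((h T t \<omega>)\<^sup>2 * (\<gamma> t \<omega> (W t \<omega>))\<^sup>2) \<partial>M)
          = (\<integral>\<^sup>+\<omega>. \<integral>\<^sup>+w. ennreal ((h T t \<omega>)\<^sup>2 * (\<gamma> t \<omega> w)\<^sup>2) \<partial>P t \<omega> \<partial>M)"
        by (rule tower[where g="\<lambda>\<omega> w. ennreal ((h T t \<omega>)\<^sup>2 * (\<gamma> t \<omega> w)\<^sup>2)" and W="W t" and P="P t",
              OF prob subH Wt Pt[OF t1] law ge])
      also have "\<dots> = (\<integral>\<^sup>+\<omega>. ennreal (q T t \<omega>) \<partial>M)"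
      proof (rule nn_integral_cong)
        fix \<omega> assume w: "\<omega> \<in> space M"
        note gP[OF t1 w, THEN conjunct1, measurable]
        have "(\<integral>\<^sup>+w. ennreal ((h T t \<omega>)\<^sup>2 * (\<gamma> t \<omega> w)\<^sup>2) \<partial>P t \<omega>)
            = (\<integral>\<^sup>+w. ennreal ((h T t \<omega>)\<^sup>2) * ennreal ((\<gamma> t \<omega> w)\<^sup>2) \<partial>P t \<omega>)"
          by (simp add: ennreal_mult)
        also have "\<dots> = ennreal ((h T t \<omega>)\<^sup>2) * (\<integral>\<^sup>+w. ennreal ((\<gamma> t \<omega> w)\<^sup>2) \<partial>P t \<omega>)"
          by (rule nn_integral_cmult) measurable
        also have "(\<integral>\<^sup>+w. ennreal ((\<gamma> t \<omega> w)\<^sup>2) \<partial>P t \<omega>) = ennreal (v t \<omega>)"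
          unfolding v_def by (rule nn_integral_eq_integral) (use gP[OF t1 w] in auto)
        finally show "(\<integral>\<^sup>+w. ennreal ((h T t \<omega>)\<^sup>2 * (\<gamma> t \<omega> w)\<^sup>2) \<partial>P t \<omega>) = ennreal (q T t \<omega>)"
          unfolding q_def using vpos[OF t1 w] by (simp add: ennreal_mult)
      qed
      also have "\<dots> = ennreal (\<integral>\<omega>. q T t \<omega> \<partial>M)"
        by (rule nn_integral_eq_integral) (use qint[OF t] q01[OF t] in auto)
      finally have nn: "(\<integral>\<^sup>+\<omega>. ennreal ((h T t \<omega>)\<^sup>2 * (\<gamma> t \<omega> (W t \<omega>))\<^sup>2) \<partial>M) = ennreal (\<integral>\<omega>. q T t \<omega> \<partial>M)" .
      have q0: "0 \<le> (\<integral>\<omega>. q T t \<omega> \<partial>M)"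
        by (rule integral_nonneg_AE) (use q01[OF t] in auto)
      show ?thesis
        by (rule has_bochner_integral_nn_integral[OF fM _ q0 nn]) auto
    qed
    have "has_bochner_integral M (\<lambda>\<omega>. \<Sum>t=1..T. (h T t \<omega>)\<^sup>2 * (\<gamma> t \<omega> (W t \<omega>))\<^sup>2) (\<Sum>t=1..T. \<integral>\<omega>. q T t \<omega> \<partial>M)"
      by (rule has_bochner_integral_sum) (rule each)
    then have "(\<integral>\<omega>. (\<Sum>t=1..T. (h T t \<omega>)\<^sup>2 * (\<gamma> t \<omega> (W t \<omega>))\<^sup>2) \<partial>M) = (\<Sum>t=1..T. \<integral>\<omega>. q T t \<omega> \<partial>M)"
      by (rule has_bochner_integral_integral_eq)
    also have "\<dots> = (\<integral>\<omega>. (\<Sum>t=1..T. q T t \<omega>) \<partial>M)"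
    proof -
      have "(\<integral>\<omega>. (\<Sum>t=1..T. q T t \<omega>) \<partial>M) = (\<Sum>t=1..T. \<integral>\<omega>. q T t \<omega> \<partial>M)"
        using qint[of _ T] by (simp add: integral_sum)
      then show ?thesis by simp
    qed
    also have "\<dots> = (\<integral>\<omega>. 1 \<partial>M)"
      by (rule Bochner_Integration.integral_cong) (use det T1 in auto)
    also have "\<dots> = 1" by (simp add: prob_space)
    finally show ?thesis .
  qed
  have sq_powr: "(y\<^sup>2) powr c = y powr (2 * c)" if "0 \<le> y" for y c :: real
  proof (cases "y = 0")
    case True then show ?thesis by simp
  next
    case False
    then have "y > 0" using that by simp
    then have "y\<^sup>2 = y powr 2" by (simp add: powr_realpow)
    then show ?thesis by (simp add: powr_powr)
  qed
  have Tpow0: "((\<lambda>T. real T powr r) \<longlongrightarrow> 0) sequentially" if "r < 0" for r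
    by (rule tendsto_neg_powr[OF that filterlim_real_sequentially])
  have sumhM: "(\<lambda>\<omega>. \<Sum>t=1..T. h T t \<omega>) \<in> borel_measurable M" for T
    by (rule borel_measurable_sum) (rule hM)
  have lb: "1 / (K0 * real T powr (\<alpha> - 1)) \<le> (\<Sum>t=1..T. h T t \<omega>)\<^sup>2"
    if T1: "T \<ge> 1" and w: "\<omega> \<in> space M" for T \<omega>
  proof -
    define B where "B = K0 * real T powr (\<alpha> - 1)"
    have Bpos: "B > 0" unfolding B_def using K0pos T1 by simp
    note d = det[OF T1 w]
    have qh: "q T t \<omega> \<le> h T t \<omega> * sqrt B" if t: "t \<in> {1..T}" for t
    proof -
      have t1: "t \<ge> 1" using t by simp
      have h0: "0 \<le> h T t \<omega>" using h_rec t w by blast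
      have vp: "v t \<omega> > 0" using vpos[OF t1 w] by simp
      have "(h T t \<omega> * v t \<omega>)\<^sup>2 = q T t \<omega> * v t \<omega>" unfolding q_def by (simp add: power2_eq_square)
      also have "\<dots> \<le> B" using d t unfolding B_def by blast
      finally have "h T t \<omega> * v t \<omega> \<le> sqrt B" by (rule real_le_rsqrt)
      then have "h T t \<omega> * (h T t \<omega> * v t \<omega>) \<le> h T t \<omega> * sqrt B" using h0 by (rule mult_left_mono)
      then show ?thesis unfolding q_def by (simp add: power2_eq_square mult.assoc)
    qed
    have "1 = (\<Sum>t=1..T. q T t \<omega>)" using d by simp
    also have "\<dots> \<le> (\<Sum>t=1..T. h T t \<omega> * sqrt B)" by (rule sum_mono) (rule qh)
    also have "\<dots> = sqrt B * (\<Sum>t=1..T. h T t \<omega>)" by (simp add: sum_distrib_left mult.commute)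
    finally have s1: "1 \<le> sqrt B * (\<Sum>t=1..T. h T t \<omega>)" .
    have S0: "0 \<le> (\<Sum>t=1..T. h T t \<omega>)" using h_rec w by (intro sum_nonneg) blast
    have "1 \<le> (sqrt B * (\<Sum>t=1..T. h T t \<omega>))\<^sup>2"
      using s1 by (metis one_le_power)
    also have "\<dots> = B * (\<Sum>t=1..T. h T t \<omega>)\<^sup>2" using Bpos by (simp add: power_mult_distrib)
    finally have "1 \<le> B * (\<Sum>t=1..T. h T t \<omega>)\<^sup>2" .
    then show ?thesis unfolding B_def[symmetric] using Bpos by (simp add: divide_le_eq mult.commute)
  qed
  have A1: "conv_prob_infty M (\<lambda>T \<omega>. (\<Sum>t=1..T. h T t \<omega>)\<^sup>2
            / (\<integral>\<omega>'. (\<Sum>t=1..T. (h T t \<omega>')\<^sup>2 * (\<gamma> t \<omega>' (W t \<omega>'))\<^sup>2) \<partial>M))"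
    unfolding conv_prob_infty_def
  proof (intro conjI allI)
    fix T
    note sumhM[of T, measurable]
    show "(\<lambda>\<omega>. (\<Sum>t=1..T. h T t \<omega>)\<^sup>2 / (\<integral>\<omega>'. (\<Sum>t=1..T. (h T t \<omega>')\<^sup>2 * (\<gamma> t \<omega>' (W t \<omega>'))\<^sup>2) \<partial>M))
      \<in> borel_measurable M" by measurable
  next
    fix K :: real
    have pos: "1 / (K0 * (\<bar>K\<bar> + 1)) > 0" using K0pos by simp
    have ev1: "eventually (\<lambda>T. real T powr (\<alpha> - 1) < 1 / (K0 * (\<bar>K\<bar> + 1))) sequentially"
      using order_tendstoD(2)[OF Tpow0 pos] a1 by simp
    have "eventually (\<lambda>T. measure M {\<omega>\<in>space M. (\<Sum>t=1..T. h T t \<omega>)\<^sup>2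
            / (\<integral>\<omega>'. (\<Sum>t=1..T. (h T t \<omega>')\<^sup>2 * (\<gamma> t \<omega>' (W t \<omega>'))\<^sup>2) \<partial>M) \<le> K} = 0) sequentially"
      using ev1 eventually_ge_at_top[of 1]
    proof eventually_elim
      case (elim T)
      have T1: "T \<ge> 1" using elim by simp
      have "{\<omega>\<in>space M. (\<Sum>t=1..T. h T t \<omega>)\<^sup>2
            / (\<integral>\<omega>'. (\<Sum>t=1..T. (h T t \<omega>')\<^sup>2 * (\<gamma> t \<omega>' (W t \<omega>'))\<^sup>2) \<partial>M) \<le> K} = {}"
      proof -
        { fix \<omega> assume w: "\<omega> \<in> space M"
          have Tp: "real T powr (\<alpha> - 1) > 0" using T1 by simp
          have pk: "K0 * (\<bar>K\<bar> + 1) > 0" using K0pos by simp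
          have x1: "real T powr (\<alpha> - 1) * (K0 * (\<bar>K\<bar> + 1)) < 1"
            using pos_less_divide_eq[OF pk] elim(1) by blast
          have kx: "K0 * real T powr (\<alpha> - 1) > 0" using K0pos Tp by simp
          have eqx: "(\<bar>K\<bar> + 1) * (K0 * real T powr (\<alpha> - 1)) = real T powr (\<alpha> - 1) * (K0 * (\<bar>K\<bar> + 1))"
            by (simp add: algebra_simps)
          have "\<bar>K\<bar> + 1 < 1 / (K0 * real T powr (\<alpha> - 1))"
          proof -
            have "(\<bar>K\<bar> + 1) * (K0 * real T powr (\<alpha> - 1)) < 1" using x1 eqx by linarith
            then show ?thesis using pos_less_divide_eq[OF kx] by blast
          qed
          also have "\<dots> \<le> (\<Sum>t=1..T. h T t \<omega>)\<^sup>2" by (rule lb[OF T1 w])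
          finally have "K < (\<Sum>t=1..T. h T t \<omega>)\<^sup>2" by linarith
          then have "\<not> (\<Sum>t=1..T. h T t \<omega>)\<^sup>2
            / (\<integral>\<omega>'. (\<Sum>t=1..T. (h T t \<omega>')\<^sup>2 * (\<gamma> t \<omega>' (W t \<omega>'))\<^sup>2) \<partial>M) \<le> K"
            using den[OF T1] by simp }
        then show ?thesis by auto
      qed
      note emp = this
      show ?case unfolding emp by simp
    qed
    then show "(\<lambda>T. measure M {\<omega>\<in>space M. (\<Sum>t=1..T. h T t \<omega>)\<^sup>2
            / (\<integral>\<omega>'. (\<Sum>t=1..T. (h T t \<omega>')\<^sup>2 * (\<gamma> t \<omega>' (W t \<omega>'))\<^sup>2) \<partial>M) \<le> K}) \<longlonglongrightarrow> 0"
      by (rule tendsto_eventually)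
  qed
  have A2: "conv_Lp M 2 (\<lambda>T \<omega>. (\<Sum>t=1..T. (h T t \<omega>)\<^sup>2 * (\<integral>w. (\<gamma> t \<omega> w)\<^sup>2 \<partial>P t \<omega>))
            / (\<integral>\<omega>'. (\<Sum>t=1..T. (h T t \<omega>')\<^sup>2 * (\<gamma> t \<omega>' (W t \<omega>'))\<^sup>2) \<partial>M)) 1"
    unfolding conv_Lp_def
  proof (intro conjI allI)
    fix T
    have sM: "(\<lambda>\<omega>. \<Sum>t=1..T. (h T t \<omega>)\<^sup>2 * (\<integral>w. (\<gamma> t \<omega> w)\<^sup>2 \<partial>P t \<omega>)) \<in> borel_measurable M"
    proof (rule borel_measurable_sum)
      fix t assume t: "t \<in> {1..T}"
      have "q T t = (\<lambda>\<omega>. (h T t \<omega>)\<^sup>2 * (\<integral>w. (\<gamma> t \<omega> w)\<^sup>2 \<partial>P t \<omega>))"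
        by (rule ext) (simp add: q_def v_def)
      then show "(\<lambda>\<omega>. (h T t \<omega>)\<^sup>2 * (\<integral>w. (\<gamma> t \<omega> w)\<^sup>2 \<partial>P t \<omega>)) \<in> borel_measurable M"
        using qM[OF t] by simp
    qed
    note sM[measurable]
    show "(\<lambda>\<omega>. (\<Sum>t=1..T. (h T t \<omega>)\<^sup>2 * (\<integral>w. (\<gamma> t \<omega> w)\<^sup>2 \<partial>P t \<omega>))
            / (\<integral>\<omega>'. (\<Sum>t=1..T. (h T t \<omega>')\<^sup>2 * (\<gamma> t \<omega>' (W t \<omega>'))\<^sup>2) \<partial>M)) \<in> borel_measurable M"
      by measurable
  next
    have "eventually (\<lambda>T. (\<integral>\<^sup>+\<omega>. ennreal (\<bar>(\<Sum>t=1..T. (h T t \<omega>)\<^sup>2 * (\<integral>w. (\<gamma> t \<omega> w)\<^sup>2 \<partial>P t \<omega>))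
            / (\<integral>\<omega>'. (\<Sum>t=1..T. (h T t \<omega>')\<^sup>2 * (\<gamma> t \<omega>' (W t \<omega>'))\<^sup>2) \<partial>M) - 1\<bar> powr 2) \<partial>M) = 0) sequentially"
      using eventually_ge_at_top[of 1]
    proof eventually_elim
      case (elim T)
      have "(\<integral>\<^sup>+\<omega>. ennreal (\<bar>(\<Sum>t=1..T. (h T t \<omega>)\<^sup>2 * (\<integral>w. (\<gamma> t \<omega> w)\<^sup>2 \<partial>P t \<omega>))
            / (\<integral>\<omega>'. (\<Sum>t=1..T. (h T t \<omega>')\<^sup>2 * (\<gamma> t \<omega>' (W t \<omega>'))\<^sup>2) \<partial>M) - 1\<bar> powr 2) \<partial>M)
          = (\<integral>\<^sup>+\<omega>. 0 \<partial>M)"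
      proof (rule nn_integral_cong)
        fix \<omega> assume w: "\<omega> \<in> space M"
        have "(\<Sum>t=1..T. (h T t \<omega>)\<^sup>2 * (\<integral>w. (\<gamma> t \<omega> w)\<^sup>2 \<partial>P t \<omega>)) = 1"
          using det[OF elim w] unfolding q_def v_def by simp
        then show "ennreal (\<bar>(\<Sum>t=1..T. (h T t \<omega>)\<^sup>2 * (\<integral>w. (\<gamma> t \<omega> w)\<^sup>2 \<partial>P t \<omega>))
            / (\<integral>\<omega>'. (\<Sum>t=1..T. (h T t \<omega>')\<^sup>2 * (\<gamma> t \<omega>' (W t \<omega>'))\<^sup>2) \<partial>M) - 1\<bar> powr 2) = 0"
          using den[OF elim] by simp
      qed
      then show ?case by simp
    qed
    then show "(\<lambda>T. \<integral>\<^sup>+\<omega>. ennreal (\<bar>(\<Sum>t=1..T. (h T t \<omega>)\<^sup>2 * (\<integral>w. (\<gamma> t \<omega> w)\<^sup>2 \<partial>P t \<omega>))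
            / (\<integral>\<omega>'. (\<Sum>t=1..T. (h T t \<omega>')\<^sup>2 * (\<gamma> t \<omega>' (W t \<omega>'))\<^sup>2) \<partial>M) - 1\<bar> powr 2) \<partial>M) \<longlonglongrightarrow> 0"
      by (rule tendsto_eventually)
  qed
  define \<rho> where "\<rho> = \<alpha> + (\<alpha> - 1) * (\<delta> / 2)"
  define Cb where "Cb = C * C' * K0 powr (\<delta> / 2)"
  have rho_neg: "\<rho> < 0"
  proof -
    have "\<alpha> * (2 + \<delta>) < \<delta>" using alpha_lt delta_pos by (simp add: field_simps)
    then show ?thesis unfolding \<rho>_def by (simp add: field_simps)
  qed
  have ub: "(\<Sum>t=1..T. h T t \<omega> powr (2 + \<delta>) * e t \<omega>) \<le> Cb * real T powr \<rho>"
    if T1: "T \<ge> 1" and w: "\<omega> \<in> space M" for T \<omega>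
  proof -
    define B where "B = K0 * real T powr (\<alpha> - 1)"
    have Bpos: "B > 0" unfolding B_def using K0pos T1 by simp
    note d = det[OF T1 w]
    have tb: "h T t \<omega> powr (2 + \<delta>) * e t \<omega> \<le> C * C' * real T powr \<alpha> * B powr (\<delta> / 2) * q T t \<omega>"
      if t: "t \<in> {1..T}" for t
    proof -
      have t1: "t \<ge> 1" using t by simp
      have h0: "0 \<le> h T t \<omega>" using h_rec t w by blast
      have vp: "v t \<omega> > 0" using vpos[OF t1 w] by simp
      have q0: "0 \<le> q T t \<omega>" using d t by blast
      define z where "z = q T t \<omega> * v t \<omega>"
      have z0: "0 \<le> z" unfolding z_def using q0 vp by simp
      have zB: "z \<le> B" unfolding z_def B_def using d t by blast
      have zeq: "z = (h T t \<omega> * v t \<omega>)\<^sup>2" unfolding z_def q_def by (simp add: power2_eq_square)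
      have hv0: "0 \<le> h T t \<omega> * v t \<omega>" using h0 vp by simp
      have "h T t \<omega> powr (2 + \<delta>) * e t \<omega> \<le> h T t \<omega> powr (2 + \<delta>) * (C * v t \<omega> powr (2 + \<delta>))"
        using ebound[OF t1 w] by (intro mult_left_mono) auto
      also have "\<dots> = C * (h T t \<omega> * v t \<omega>) powr (2 + \<delta>)" by (simp add: powr_mult)
      also have "(h T t \<omega> * v t \<omega>) powr (2 + \<delta>) = z powr (1 + \<delta> / 2)"
      proof -
        have "z powr (1 + \<delta> / 2) = (h T t \<omega> * v t \<omega>) powr (2 * (1 + \<delta> / 2))"
          unfolding zeq by (rule sq_powr[OF hv0])
        also have "2 * (1 + \<delta> / 2) = 2 + \<delta>" by simp
        finally show ?thesis by simp
      qed
      also have "z powr (1 + \<delta> / 2) = z * z powr (\<delta> / 2)" using z0 by (simp add: powr_add)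
      also have "C * (z * z powr (\<delta> / 2)) \<le> C * (q T t \<omega> * (C' * real T powr \<alpha>) * B powr (\<delta> / 2))"
      proof -
        have "v t \<omega> \<le> C' * real t powr \<alpha>" by (rule vup[OF t1 w])
        also have "\<dots> \<le> C' * real T powr \<alpha>"
          using t alpha_nonneg C'_pos by (intro mult_left_mono powr_mono2) auto
        finally have "z \<le> q T t \<omega> * (C' * real T powr \<alpha>)" unfolding z_def using q0 by (intro mult_left_mono)
        moreover have "z powr (\<delta> / 2) \<le> B powr (\<delta> / 2)" using z0 zB delta_pos by (intro powr_mono2) auto
        ultimately show ?thesis using C_pos z0 q0 C'_pos
          by (intro mult_left_mono mult_mono) auto
      qed
      finally show ?thesis by (simp add: algebra_simps)
    qed
    have "(\<Sum>t=1..T. h T t \<omega> powr (2 + \<delta>) * e t \<omega>) \<le> (\<Sum>t=1..T. C * C' * real T powr \<alpha> * B powr (\<delta> / 2) * q T t \<omega>)"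
      by (rule sum_mono) (rule tb)
    also have "\<dots> = C * C' * real T powr \<alpha> * B powr (\<delta> / 2)" using d by (simp add: sum_distrib_left[symmetric])
    also have "\<dots> = Cb * real T powr \<rho>"
      unfolding Cb_def \<rho>_def B_def by (simp add: powr_mult powr_powr powr_add algebra_simps)
    finally show ?thesis .
  qed
  have A3: "conv_prob M (\<lambda>T \<omega>. (\<Sum>t=1..T. h T t \<omega> powr (2 + \<delta>)
                                  * (\<integral>w. \<bar>\<gamma> t \<omega> w\<bar> powr (2 + \<delta>) \<partial>P t \<omega>))
            / (\<integral>\<omega>'. (\<Sum>t=1..T. (h T t \<omega>')\<^sup>2 * (\<gamma> t \<omega>' (W t \<omega>'))\<^sup>2) \<partial>M) powr (1 + \<delta> / 2)) 0"
    unfolding conv_prob_def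
  proof (intro conjI allI impI)
    fix T
    have sM: "(\<lambda>\<omega>. \<Sum>t=1..T. h T t \<omega> powr (2 + \<delta>) * (\<integral>w. \<bar>\<gamma> t \<omega> w\<bar> powr (2 + \<delta>) \<partial>P t \<omega>)) \<in> borel_measurable M"
    proof (rule borel_measurable_sum)
      fix t assume t: "t \<in> {1..T}"
      then have t1: "t \<ge> 1" by simp
      note [measurable] = hM[OF t] eM[OF t1]
      show "(\<lambda>\<omega>. h T t \<omega> powr (2 + \<delta>) * (\<integral>w. \<bar>\<gamma> t \<omega> w\<bar> powr (2 + \<delta>) \<partial>P t \<omega>)) \<in> borel_measurable M"
        unfolding e_def[symmetric] by measurable
    qed
    note sM[measurable]
    show "(\<lambda>\<omega>. (\<Sum>t=1..T. h T t \<omega> powr (2 + \<delta>) * (\<integral>w. \<bar>\<gamma> t \<omega> w\<bar> powr (2 + \<delta>) \<partial>P t \<omega>))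
            / (\<integral>\<omega>'. (\<Sum>t=1..T. (h T t \<omega>')\<^sup>2 * (\<gamma> t \<omega>' (W t \<omega>'))\<^sup>2) \<partial>M) powr (1 + \<delta> / 2)) \<in> borel_measurable M"
      by measurable
  next
    fix \<epsilon> :: real assume eps: "\<epsilon> > 0"
    have lim: "((\<lambda>T. Cb * real T powr \<rho>) \<longlongrightarrow> 0) sequentially"
      using tendsto_mult[OF tendsto_const Tpow0[OF rho_neg], of Cb] by simp
    have ev1: "eventually (\<lambda>T. Cb * real T powr \<rho> < \<epsilon>) sequentially"
      using order_tendstoD(2)[OF lim eps] .
    have "eventually (\<lambda>T. measure M {\<omega>\<in>space M. \<bar>(\<Sum>t=1..T. h T t \<omega> powr (2 + \<delta>)
                                  * (\<integral>w. \<bar>\<gamma> t \<omega> w\<bar> powr (2 + \<delta>) \<partial>P t \<omega>))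
            / (\<integral>\<omega>'. (\<Sum>t=1..T. (h T t \<omega>')\<^sup>2 * (\<gamma> t \<omega>' (W t \<omega>'))\<^sup>2) \<partial>M) powr (1 + \<delta> / 2) - 0\<bar> > \<epsilon>} = 0) sequentially"
      using ev1 eventually_ge_at_top[of 1]
    proof eventually_elim
      case (elim T)
      have T1: "T \<ge> 1" using elim by simp
      have "{\<omega>\<in>space M. \<bar>(\<Sum>t=1..T. h T t \<omega> powr (2 + \<delta>)
                                  * (\<integral>w. \<bar>\<gamma> t \<omega> w\<bar> powr (2 + \<delta>) \<partial>P t \<omega>))
            / (\<integral>\<omega>'. (\<Sum>t=1..T. (h T t \<omega>')\<^sup>2 * (\<gamma> t \<omega>' (W t \<omega>'))\<^sup>2) \<partial>M) powr (1 + \<delta> / 2) - 0\<bar> > \<epsilon>} = {}"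
      proof -
        { fix \<omega> assume w: "\<omega> \<in> space M"
          have e0: "0 \<le> (\<Sum>t=1..T. h T t \<omega> powr (2 + \<delta>) * e t \<omega>)"
            unfolding e_def by (intro sum_nonneg mult_nonneg_nonneg integral_nonneg) auto
          have "\<bar>(\<Sum>t=1..T. h T t \<omega> powr (2 + \<delta>) * e t \<omega>) / 1 powr (1 + \<delta> / 2) - 0\<bar> < \<epsilon>"
            using e0 ub[OF T1 w] elim(1) by simp
          then have "\<not> \<bar>(\<Sum>t=1..T. h T t \<omega> powr (2 + \<delta>)
                                  * (\<integral>w. \<bar>\<gamma> t \<omega> w\<bar> powr (2 + \<delta>) \<partial>P t \<omega>))
            / (\<integral>\<omega>'. (\<Sum>t=1..T. (h T t \<omega>')\<^sup>2 * (\<gamma> t \<omega>' (W t \<omega>'))\<^sup>2) \<partial>M) powr (1 + \<delta> / 2) - 0\<bar> > \<epsilon>"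
            using den[OF T1] unfolding e_def by simp }
        then show ?thesis by auto
      qed
      note emp = this
      show ?case unfolding emp by simp
    qed
    then show "(\<lambda>T. measure M {\<omega>\<in>space M. \<bar>(\<Sum>t=1..T. h T t \<omega> powr (2 + \<delta>)
                                  * (\<integral>w. \<bar>\<gamma> t \<omega> w\<bar> powr (2 + \<delta>) \<partial>P t \<omega>))
            / (\<integral>\<omega>'. (\<Sum>t=1..T. (h T t \<omega>')\<^sup>2 * (\<gamma> t \<omega>' (W t \<omega>'))\<^sup>2) \<partial>M) powr (1 + \<delta> / 2) - 0\<bar> > \<epsilon>}) \<longlonglongrightarrow> 0"
      by (rule tendsto_eventually)
  qed
  show ?thesis using A1 A2 A3 by force
qed

end
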